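(* Let $S$ be a finite state space, let $P\in\mathbb{R}^{|S|\times|S|}$ be a row-stochastic matrix, let $\gamma\in[0,1)$, $\beta\in(0,1)$, and let $R\in\mathbb{R}^{|S|}$. Let $d_\mu\in\mathbb{R}^{|S|}$ be a probability vector, and define $f$ by $f^\top = d_\mu^\top (I-\beta P)^{-1}$; assume $f(s)>0$ for all $s\in S$. Let $\kappa = \min_{s\in S} \frac{d_\mu(s)}{f(s)}$. Let $T:\mathbb{R}^{|S|}\to\mathbb{R}^{|S|}$ be $T(V)=R+\gamma P V$, and let $\Pi_f$ be the orthogonal projection, with respect to the $f$-weighted Euclidean norm $\|v\|_f=\sqrt{\sum_s f(s)v(s)^2}$, onto a fixed linear subspace of $\mathbb{R}^{|S|}$ (the span of the feature vectors). If $\beta>\gamma^2(1-\kappa)$, then for all $v_1,v_2\in\mathbb{R}^{|S|}$, $$\|\Pi_f T v_1-\Pi_f T v_2\|_f\le \sqrt{\tfrac{\gamma^2}{\beta}(1-\kappa)}\,\|v_1-v_2\|_f,$$ i.e. $\Pi_f T$ is a $\sqrt{\frac{\gamma^2}{\beta}(1-\kappa)}$-contraction in the $f$-weighted norm.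
   Context: Setting: a finite Markov decision process with target policy $\pi$ and behavior policy $\mu$; $P$ and $R$ are the transition matrix and reward vector induced by the target policy $\pi$, and $d_\mu$ is the stationary distribution over states induced by the behavior policy $\mu$. The vector $f$ is called the emphatic weight vector and $\kappa$ measures the discrepancy between target and behavior policies. The subspace onto which $\Pi_f$ projects is the span of the columns of $\Phi^\top$, where $\Phi$ is the matrix whose columns are the feature vectors $\phi(s)\in\mathbb{R}^n$. *)

theory Defs
  imports "HOL-Analysis.Analysis"
begin

text \<open>Finite state space = finite index type 's; vectors in R^|S| are real^'s,
matrices are real^'s^'s (rows indexed first).\<close>

definition row_stochastic :: "real^'s^'s \<Rightarrow> bool" where
  "row_stochastic P \<longleftrightarrow> (\<forall>i j. P $ i $ j \<ge> 0) \<and> (\<forall>i. (\<Sum>j\<in>UNIV. P $ i $ j) = 1)"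

definition prob_vector :: "real^'s \<Rightarrow> bool" where
  "prob_vector d \<longleftrightarrow> (\<forall>s. d $ s \<ge> 0) \<and> (\<Sum>s\<in>UNIV. d $ s) = 1"

definition emphatic_weight :: "real \<Rightarrow> real^'s^'s \<Rightarrow> real^'s \<Rightarrow> real^'s" where
  "emphatic_weight \<beta> P d = d v* matrix_inv (mat 1 - \<beta> *\<^sub>R P)"

definition finner :: "real^'s \<Rightarrow> real^'s \<Rightarrow> real^'s \<Rightarrow> real" where
  "finner f u v = (\<Sum>s\<in>UNIV. f $ s * u $ s * v $ s)"

definition fnorm :: "real^'s \<Rightarrow> real^'s \<Rightarrow> real" where
  "fnorm f v = sqrt (\<Sum>s\<in>UNIV. f $ s * (v $ s)\<^sup>2)"

definition fproj :: "real^'s \<Rightarrow> (real^'s) set \<Rightarrow> real^'s \<Rightarrow> real^'s" where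
  "fproj f W v = (THE p. p \<in> W \<and> (\<forall>w\<in>W. finner f (v - p) w = 0))"

definition bellman :: "real^'s \<Rightarrow> real \<Rightarrow> real^'s^'s \<Rightarrow> real^'s \<Rightarrow> real^'s" where
  "bellman R \<gamma> P V = R + \<gamma> *\<^sub>R (P *v V)"

end

theory Submission
  imports Defs
begin


lemma mv: "((mat 1 - b *\<^sub>R P) *v (x::real^'s)) $ i = x $ i - b * (\<Sum>j\<in>UNIV. P$i$j * x$j)"
proof -
  have "(mat 1 - b *\<^sub>R P) *v x = x - b *\<^sub>R (P *v x)"
    by (simp add: matrix_vector_mult_diff_rdistrib scaleR_matrix_vector_assoc)
  then show ?thesis by (simp add: matrix_vector_mult_def)
qed

lemma vm: "((y::real^'s) v* (mat 1 - b *\<^sub>R P)) $ j = y $ j - b * (\<Sum>i\<in>UNIV. y$i * P$i$j)"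
proof -
  have "b *\<^sub>R (y v* P) = y v* (b *\<^sub>R P)"
    by (simp add: vec_eq_iff vector_matrix_mult_def sum_distrib_left algebra_simps)
  then have "y v* (mat 1 - b *\<^sub>R P) = y - b *\<^sub>R (y v* P)"
    by (simp add: vector_matrix_left_distrib  algebra_simps)
  then show ?thesis by (simp add: vector_matrix_mult_def)
qed

lemma inv_M:
  fixes P :: "real^'s^'s"
  assumes rs: "row_stochastic P" and b: "0 < b" "b < 1"
  shows "invertible (mat 1 - b *\<^sub>R P)"
proof -
  have "\<forall>x. (mat 1 - b *\<^sub>R P) *v x = 0 \<longrightarrow> x = 0"
  proof (intro allI impI)
    fix x :: "real^'s" assume h: "(mat 1 - b *\<^sub>R P) *v x = 0"
    define m where "m = Max (range (\<lambda>i. \<bar>x$i\<bar>))"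
    have mge: "\<And>i. \<bar>x$i\<bar> \<le> m" unfolding m_def by (rule Max_ge) auto
    have bnd: "\<bar>x$i\<bar> \<le> b*m" for i
    proof -
      have xi: "x$i = b * (\<Sum>j\<in>UNIV. P$i$j * x$j)"
        using arg_cong[OF h, of "\<lambda>v. v$i"] by (simp add: mv)
      have "\<bar>\<Sum>j\<in>UNIV. P$i$j * x$j\<bar> \<le> (\<Sum>j\<in>UNIV. \<bar>P$i$j * x$j\<bar>)"
        by (rule sum_abs)
      also have "\<dots> \<le> (\<Sum>j\<in>UNIV. P$i$j * m)"
        apply (rule sum_mono)
        using rs mge unfolding row_stochastic_def
        by (simp add: abs_mult mult_left_mono)
      also have "\<dots> = m" using rs unfolding row_stochastic_def
        by (simp add: sum_distrib_right[symmetric])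
      finally show ?thesis using xi b by (simp add: abs_mult mult_left_mono)
    qed
    have "m \<in> range (\<lambda>i. \<bar>x$i\<bar>)" unfolding m_def by (rule Max_in) auto
    then obtain i0 where "m = \<bar>x$i0\<bar>" by auto
    then have "m \<le> b*m" "0 \<le> m" using bnd[of i0] by auto
    then have "m = 0" using b by (smt (verit) mult_le_cancel_right1)
    then show "x = 0" using mge by (simp add: vec_eq_iff)
  qed
  then obtain B where "B ** (mat 1 - b *\<^sub>R P) = mat 1" using matrix_left_invertible_ker by blast
  then show ?thesis using invertible_left_inverse by blast
qed

lemma emph_eq:
  fixes P :: "real^'s^'s"
  assumes rs: "row_stochastic P" and b: "0 < b" "b < 1"
  shows "d $ j = emphatic_weight b P d $ j - b * (\<Sum>i\<in>UNIV. emphatic_weight b P d $ i * P$i$j)"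
proof -
  let ?M = "mat 1 - b *\<^sub>R P"
  have "\<exists>A'. ?M ** A' = mat 1 \<and> A' ** ?M = mat 1" using inv_M[OF assms] invertible_def by blast
  then have "matrix_inv ?M ** ?M = mat 1" unfolding matrix_inv_def by (rule someI2_ex) auto
  then have "emphatic_weight b P d v* ?M = d"
    unfolding emphatic_weight_def by (simp add: vector_matrix_mul_assoc)
  then show ?thesis by (metis vm)
qed

lemma jensen:
  fixes P :: "real^'s^'s"
  assumes rs: "row_stochastic P"
  shows "(\<Sum>j\<in>UNIV. P$i$j * v$j)\<^sup>2 \<le> (\<Sum>j\<in>UNIV. P$i$j * (v$j)\<^sup>2)"
proof -
  define m where "m = (\<Sum>j\<in>UNIV. P$i$j * v$j)"
  have s1: "(\<Sum>j\<in>UNIV. P$i$j) = 1" using rs unfolding row_stochastic_def by auto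
  have "0 \<le> (\<Sum>j\<in>UNIV. P$i$j * (v$j - m)\<^sup>2)"
    using rs unfolding row_stochastic_def by (intro sum_nonneg) auto
  also have "\<dots> = (\<Sum>j\<in>UNIV. P$i$j * (v$j)\<^sup>2) - 2*m*(\<Sum>j\<in>UNIV. P$i$j * v$j) + m^2 * (\<Sum>j\<in>UNIV. P$i$j)"
    by (simp add: power2_diff algebra_simps sum.distrib sum_subtractf sum_distrib_left)
  finally show ?thesis using s1 unfolding m_def by (simp add: power2_eq_square)
qed



lemma finner_diff_left: "finner f (u - v) w = finner f u w - finner f v w"
  unfolding finner_def by (simp add: algebra_simps sum_subtractf)
lemma finner_add_left: "finner f (u + v) w = finner f u w + finner f v w"
  unfolding finner_def by (simp add: algebra_simps sum.distrib)
lemma finner_sq: "finner f (u + v) (u + v) = finner f u u + 2 * finner f v u + finner f v v"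
  unfolding finner_def by (simp add: algebra_simps sum.distrib sum_distrib_left)
lemma finner_sym: "finner f u w = finner f w u"
  unfolding finner_def by (simp add: algebra_simps)
lemma fnorm_finner: "fnorm f v = sqrt (finner f v v)"
  unfolding fnorm_def finner_def by (simp add: power2_eq_square algebra_simps)
lemma finner_self_nonneg: "\<forall>s. f$s > 0 \<Longrightarrow> 0 \<le> finner f v v"
  unfolding finner_def by (intro sum_nonneg) (simp add: mult.assoc less_imp_le)
lemma finner_self_zero: assumes "\<forall>s. f$s > 0" "finner f v v = 0" shows "v = 0"
proof -
  have "\<forall>s\<in>UNIV. f$s * v$s * v$s = 0"
    using assms unfolding finner_def
    by (subst sum_nonneg_eq_0_iff[symmetric]) (auto simp: mult.assoc less_imp_le)
  then show ?thesis using assms(1) by (simp add: vec_eq_iff) (metis less_irrefl)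
qed

lemma fproj_exists:
  fixes f :: "real^'s"
  assumes pos: "\<forall>s. f$s > 0" and W: "subspace W"
  shows "\<exists>p. p \<in> W \<and> (\<forall>w\<in>W. finner f (v - p) w = 0)"
proof -
  define g where "g = (\<lambda>u::real^'s. \<chi> s. sqrt (f$s) * u$s)"
  have lin: "linear g" unfolding g_def
    by (rule linearI) (simp_all add: vec_eq_iff algebra_simps)
  have gi: "finner f u w = g u \<bullet> g w" for u w
    unfolding finner_def g_def inner_vec_def using pos
    by (intro sum.cong) (auto simp: algebra_simps less_imp_le)
  have sub: "subspace (g ` W)" by (rule linear_subspace_image[OF lin W])
  obtain y z where y: "y \<in> span (g ` W)" and z: "\<And>w. w \<in> span (g ` W) \<Longrightarrow> orthogonal z w"
     and e: "g v = y + z"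
    using orthogonal_subspace_decomp_exists[of "g ` W" "g v"] by blast
  have "span (g ` W) = g ` W" using sub by (simp add: span_eq_iff)
  then have "y \<in> g ` W" using y by (simp only:)
  then obtain w0 where w0: "w0 \<in> W" "y = g w0" by auto
  have "finner f (v - w0) w = 0" if "w \<in> W" for w
  proof -
    have "finner f (v - w0) w = (g v - g w0) \<bullet> g w" using gi linear_diff[OF lin] by simp
    also have "\<dots> = z \<bullet> g w" using e w0 by simp
    also have "\<dots> = 0" using z[of "g w"] that \<open>span (g ` W) = g ` W\<close> orthogonal_def by auto
    finally show ?thesis .
  qed
  then show ?thesis using w0 by blast
qed

lemma fproj_unique:
  assumes pos: "\<forall>s. f$s > 0" and W: "subspace W"
    and p1: "p1 \<in> W" "\<forall>w\<in>W. finner f (v - p1) w = 0"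
    and p2: "p2 \<in> W" "\<forall>w\<in>W. finner f (v - p2) w = 0"
  shows "p1 = p2"
proof -
  have d: "p1 - p2 \<in> W" using W p1 p2 by (simp add: subspace_diff)
  have "finner f (p1 - p2) (p1 - p2) = finner f (v - p2) (p1 - p2) - finner f (v - p1) (p1 - p2)"
    by (simp add: finner_diff_left)
  also have "\<dots> = 0" using d p1 p2 by simp
  finally show ?thesis using finner_self_zero[OF pos, of "p1 - p2"] by simp
qed

lemma fproj_prop:
  assumes pos: "\<forall>s. f$s > 0" and W: "subspace W"
  shows "fproj f W v \<in> W \<and> (\<forall>w\<in>W. finner f (v - fproj f W v) w = 0)"
proof -
  have "\<exists>!p. p \<in> W \<and> (\<forall>w\<in>W. finner f (v - p) w = 0)"
    using fproj_exists[OF pos W] fproj_unique[OF pos W] by blast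
  then show ?thesis unfolding fproj_def by (rule theI')
qed

lemma fproj_diff:
  assumes pos: "\<forall>s. f$s > 0" and W: "subspace W"
  shows "fproj f W a - fproj f W b = fproj f W (a - b)"
proof (rule fproj_unique[OF pos W])
  show "fproj f W a - fproj f W b \<in> W" using fproj_prop[OF pos W] W by (simp add: subspace_diff)
  show "\<forall>w\<in>W. finner f (a - b - (fproj f W a - fproj f W b)) w = 0"
  proof
    fix w assume "w \<in> W"
    have "a - b - (fproj f W a - fproj f W b) = (a - fproj f W a) - (b - fproj f W b)" by simp
    then show "finner f (a - b - (fproj f W a - fproj f W b)) w = 0"
      using fproj_prop[OF pos W] \<open>w \<in> W\<close> by (simp only: finner_diff_left)
  qed
  show "fproj f W (a - b) \<in> W" "\<forall>w\<in>W. finner f (a - b - fproj f W (a - b)) w = 0"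
    using fproj_prop[OF pos W] by auto
qed

lemma fproj_nonexp:
  assumes pos: "\<forall>s. f$s > 0" and W: "subspace W"
  shows "fnorm f (fproj f W x) \<le> fnorm f x"
proof -
  let ?p = "fproj f W x"
  have o: "finner f (x - ?p) ?p = 0" using fproj_prop[OF pos W] by blast
  have "x = ?p + (x - ?p)" by simp
  then have "finner f x x = finner f (?p + (x - ?p)) (?p + (x - ?p))" by simp
  also have "\<dots> = finner f ?p ?p + 2 * finner f (x - ?p) ?p + finner f (x - ?p) (x - ?p)"
    by (rule finner_sq)
  finally have "finner f ?p ?p \<le> finner f x x"
    using o finner_self_nonneg[OF pos, of "x - ?p"] by simp
  then show ?thesis by (simp add: fnorm_finner)
qed


lemma fnorm_scale: "fnorm f (c *\<^sub>R v) = \<bar>c\<bar> * fnorm f v"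
proof -
  have "fnorm f (c *\<^sub>R v) = sqrt (c\<^sup>2 * (\<Sum>s\<in>UNIV. f $ s * (v $ s)\<^sup>2))"
    unfolding fnorm_def by (simp add: sum_distrib_left power_mult_distrib algebra_simps)
  then show ?thesis by (simp add: real_sqrt_mult fnorm_def)
qed

theorem theorem1:
  fixes P :: "real^'s^'s" and R d\<^sub>\<mu> :: "real^'s" and \<gamma> \<beta> :: real
    and W :: "(real^'s) set"
  assumes "row_stochastic P"
    and "0 \<le> \<gamma>" and "\<gamma> < 1"
    and "0 < \<beta>" and "\<beta> < 1"
    and "prob_vector d\<^sub>\<mu>"
    and "\<forall>s. emphatic_weight \<beta> P d\<^sub>\<mu> $ s > 0"
    and "subspace W"
    and "\<beta> > \<gamma>\<^sup>2 * (1 - (MIN s. d\<^sub>\<mu> $ s / emphatic_weight \<beta> P d\<^sub>\<mu> $ s))"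
  shows "\<forall>v\<^sub>1 v\<^sub>2.
    fnorm (emphatic_weight \<beta> P d\<^sub>\<mu>)
      (fproj (emphatic_weight \<beta> P d\<^sub>\<mu>) W (bellman R \<gamma> P v\<^sub>1)
       - fproj (emphatic_weight \<beta> P d\<^sub>\<mu>) W (bellman R \<gamma> P v\<^sub>2))
    \<le> sqrt (\<gamma>\<^sup>2 / \<beta> * (1 - (MIN s. d\<^sub>\<mu> $ s / emphatic_weight \<beta> P d\<^sub>\<mu> $ s)))
       * fnorm (emphatic_weight \<beta> P d\<^sub>\<mu>) (v\<^sub>1 - v\<^sub>2)"
proof (intro allI)
  fix v1 v2 :: "real^'s"
  define f where "f = emphatic_weight \<beta> P d\<^sub>\<mu>"
  define k where "k = (MIN s. d\<^sub>\<mu> $ s / f $ s)"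
  define w where "w = v1 - v2"
  have pos: "\<forall>s. f$s > 0" using assms(7) f_def by simp
  have rs: "row_stochastic P" and b: "0 < \<beta>" "\<beta> < 1" using assms by auto
  have kle: "k * f$j \<le> d\<^sub>\<mu>$j" for j
  proof -
    have "k \<le> d\<^sub>\<mu> $ j / f $ j" unfolding k_def by (rule Min_le) auto
    then show ?thesis using pos by (simp add: pos_le_divide_eq)
  qed
  have col: "(\<Sum>i\<in>UNIV. f $ i * P$i$j) = (f$j - d\<^sub>\<mu>$j) / \<beta>" for j
    using emph_eq[OF rs b, of d\<^sub>\<mu> j] b unfolding f_def by (simp add: field_simps)
  have bd: "bellman R \<gamma> P v1 - bellman R \<gamma> P v2 = \<gamma> *\<^sub>R (P *v w)"
    unfolding bellman_def w_def by (simp add: matrix_vector_mult_diff_distrib scaleR_diff_right)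
  have "(\<Sum>s\<in>UNIV. f$s * ((P *v w)$s)\<^sup>2) = (\<Sum>s\<in>UNIV. f$s * (\<Sum>j\<in>UNIV. P$s$j * w$j)\<^sup>2)"
    by (simp add: matrix_vector_mult_def)
  also have "\<dots> \<le> (\<Sum>s\<in>UNIV. f$s * (\<Sum>j\<in>UNIV. P$s$j * (w$j)\<^sup>2))"
    using pos jensen[OF rs] by (intro sum_mono mult_left_mono) (auto simp: less_imp_le)
  also have "\<dots> = (\<Sum>j\<in>UNIV. (\<Sum>s\<in>UNIV. f$s * P$s$j) * (w$j)\<^sup>2)"
  proof -
    have "(\<Sum>s\<in>UNIV. f$s * (\<Sum>j\<in>UNIV. P$s$j * (w$j)\<^sup>2)) = (\<Sum>s\<in>UNIV. \<Sum>j\<in>UNIV. f$s * P$s$j * (w$j)\<^sup>2)"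
      by (simp add: sum_distrib_left mult.assoc)
    also have "\<dots> = (\<Sum>j\<in>UNIV. \<Sum>s\<in>UNIV. f$s * P$s$j * (w$j)\<^sup>2)"
      by (rule sum.swap)
    also have "\<dots> = (\<Sum>j\<in>UNIV. (\<Sum>s\<in>UNIV. f$s * P$s$j) * (w$j)\<^sup>2)"
      by (simp add: sum_distrib_right)
    finally show ?thesis .
  qed
  also have "\<dots> = (\<Sum>j\<in>UNIV. ((f$j - d\<^sub>\<mu>$j) / \<beta>) * (w$j)\<^sup>2)"
    by (simp add: col)
  also have "\<dots> \<le> (\<Sum>j\<in>UNIV. ((1 - k) / \<beta>) * (f$j * (w$j)\<^sup>2))"
  proof (intro sum_mono)
    fix j
    have "(f$j - d\<^sub>\<mu>$j) / \<beta> \<le> ((1 - k) / \<beta>) * f$j"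
      using kle[of j] b by (simp add: divide_right_mono algebra_simps)
    then show "((f$j - d\<^sub>\<mu>$j) / \<beta>) * (w$j)\<^sup>2 \<le> ((1 - k) / \<beta>) * (f$j * (w$j)\<^sup>2)"
      by (metis mult.assoc mult_right_mono zero_le_power2)
  qed
  also have "\<dots> = ((1 - k) / \<beta>) * (\<Sum>j\<in>UNIV. f$j * (w$j)\<^sup>2)"
    by (simp add: sum_distrib_left)
  finally have key: "(\<Sum>s\<in>UNIV. f$s * ((P *v w)$s)\<^sup>2) \<le> ((1 - k) / \<beta>) * (\<Sum>j\<in>UNIV. f$j * (w$j)\<^sup>2)" .
  have "fnorm f (fproj f W (bellman R \<gamma> P v1) - fproj f W (bellman R \<gamma> P v2))
        = fnorm f (fproj f W (\<gamma> *\<^sub>R (P *v w)))"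
    using fproj_diff[OF pos assms(8)] bd by simp
  also have "\<dots> \<le> fnorm f (\<gamma> *\<^sub>R (P *v w))" by (rule fproj_nonexp[OF pos assms(8)])
  also have "\<dots> = \<gamma> * sqrt (\<Sum>s\<in>UNIV. f$s * ((P *v w)$s)\<^sup>2)"
    by (simp only: fnorm_scale abs_of_nonneg[OF assms(2)]) (simp add: fnorm_def)
  also have "\<dots> \<le> \<gamma> * sqrt (((1 - k) / \<beta>) * (\<Sum>j\<in>UNIV. f$j * (w$j)\<^sup>2))"
    using key assms(2) by (intro mult_left_mono) auto
  also have "\<dots> = sqrt (\<gamma>\<^sup>2 / \<beta> * (1 - k)) * fnorm f w"
  proof -
    define S where "S = (\<Sum>j\<in>UNIV. f$j * (w$j)\<^sup>2)"
    have "\<gamma> * sqrt (((1 - k) / \<beta>) * S) = sqrt (\<gamma>\<^sup>2) * sqrt (((1 - k) / \<beta>) * S)"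
      using assms(2) by simp
    also have "\<dots> = sqrt (\<gamma>\<^sup>2 / \<beta> * (1 - k) * S)"
      by (simp only: real_sqrt_mult[symmetric]) (simp add: algebra_simps)
    also have "\<dots> = sqrt (\<gamma>\<^sup>2 / \<beta> * (1 - k)) * sqrt S" by (rule real_sqrt_mult)
    finally show ?thesis unfolding S_def fnorm_def .
  qed
  finally show "fnorm (emphatic_weight \<beta> P d\<^sub>\<mu>)
      (fproj (emphatic_weight \<beta> P d\<^sub>\<mu>) W (bellman R \<gamma> P v1)
       - fproj (emphatic_weight \<beta> P d\<^sub>\<mu>) W (bellman R \<gamma> P v2))
    \<le> sqrt (\<gamma>\<^sup>2 / \<beta> * (1 - (MIN s. d\<^sub>\<mu> $ s / emphatic_weight \<beta> P d\<^sub>\<mu> $ s)))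
       * fnorm (emphatic_weight \<beta> P d\<^sub>\<mu>) (v1 - v2)"
    unfolding f_def k_def w_def .
qed

end
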